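(* Let $m\ge1$ and let $W$ be a B-DMC. For every $n\ge1$, $$\sum_{\mathbf s\in\mathcal S_n}I(W_{\mathbf s})=\sum_{\mathbf s\in\mathcal S_{n-1}}I(W_{\mathbf s})+\sum_{\mathbf s\in\mathcal S_{n-m}}I(W_{\mathbf s}),$$ with the convention $\mathcal S_k=\{\emptyset\}$ (the empty string) for $k\le0$. Consequently $\frac{1}{N(n)}\sum_{\mathbf s\in\mathcal S_n}I(W_{\mathbf s})=I(W)$ for all $n\ge1$.
   Context: Fix an integer $m\ge1$. Define integers $N(n)$ by $N(n)=1$ for $1-m\le n\le 0$ and $N(n)=N(n-1)+N(n-m)$ for $n\ge1$; write $\mathbb N_n=\{1,\dots,N(n)\}$ (so $\mathbb N_n=\{1\}$ for $n\le 0$, and $\mathbb N_{n-m}\subseteq\mathbb N_{n-1}$). Define vectors $\mathbf s_n^{(i)}\in\{+,-,\bigstar\}^n$ for $n\ge0$, $i\in\mathbb N_n$, recursively: $\mathbf s_0^{(1)}$ is the empty vector, and for $n\ge1$: $\mathbf s_n^{(j)}=(\mathbf s_{n-1}^{(j)},+)$ and $\mathbf s_n^{(j+N(n-1))}=(\mathbf s_{n-1}^{(j)},-)$ for $j\in\mathbb N_{n-m}$, while $\mathbf s_n^{(j)}=(\mathbf s_{n-1}^{(j)},\bigstar)$ for $j\in\mathbb N_{n-1}\setminus\mathbb N_{n-m}$. Let $\mathcal S_n=\{\mathbf s_n^{(i)}:i\in\mathbb N_n\}$ for $n\ge1$. A B-DMC $V$ is a channel with input alphabet $\{0,1\}$,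 a finite output alphabet $\mathcal Y$ and transition probabilities $V(y|x)$. With base-2 logarithms and uniform input: $I(V)=\sum_{y}\sum_{x}\frac12V(y|x)\log\frac{V(y|x)}{\frac12V(y|0)+\frac12V(y|1)}$, $Z(V)=\sum_y\sqrt{V(y|0)V(y|1)}$, $J(V)=\log\frac{2}{1+Z(V)}$. For B-DMCs $V':\{0,1\}\to\mathcal Y_1$ and $V'':\{0,1\}\to\mathcal Y_2$ define $V'\boxminus V'':\{0,1\}\to\mathcal Y_1\times\mathcal Y_2$ by $(V'\boxminus V'')(y_1,y_2|x_1)=\sum_{x_2\in\{0,1\}}\frac12V'(y_1|x_1\oplus x_2)V''(y_2|x_2)$, and $V'\boxplus V'':\{0,1\}\to\mathcal Y_1\times\mathcal Y_2\times\{0,1\}$ by $(V'\boxplus V'')(y_1,y_2,x_1|x_2)=\frac12V'(y_1|x_1\oplus x_2)V''(y_2|x_2)$. Fix a B-DMC $W$. For every finite string $\mathbf t=(t_1,\dots,t_n)\in\{+,-,\bigstar\}^n$, $n\ge0$, define a B-DMC $W_{\mathbf t}$ recursively: $W_{\emptyset}=W$ for the empty string; for $n\ge1$ let $\mathbf t'=(t_1,\dots,t_{n-1})$ and $\mathbf t''=(t_1,\dots,t_{n-m})$ (the empty string if $n\le m$); then $W_{\mathbf t}=W_{\mathbf t''}\boxplus W_{\mathbf t'}$ if $t_n=+$, $W_{\mathbf t}=W_{\mathbf t''}\boxminus W_{\mathbf t'}$ if $t_n=-$, and $W_{\mathbf t}=W_{\mathbf t'}$ if $t_n=\bigstar$.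 *)

theory Defs
  imports Complex_Main
begin

text \<open>Input alphabet {0,1} is modelled by bool (0 = False, 1 = True); xor is (\<noteq>).
  A channel is a pair (Y, V) of an output alphabet Y and transition probabilities V y x = V(y|x).\<close>

datatype 'y outp = Base 'y | Two "'y outp" "'y outp" | Three "'y outp" "'y outp" bool

type_synonym 'y chan = "'y set \<times> ('y \<Rightarrow> bool \<Rightarrow> real)"

definition bdmc :: "'y chan \<Rightarrow> bool" where
  "bdmc C \<longleftrightarrow> finite (fst C) \<and> (\<forall>y\<in>fst C. \<forall>x. snd C y x \<ge> 0)
     \<and> (\<forall>x. (\<Sum>y\<in>fst C. snd C y x) = 1)"

definition mutinf :: "'y chan \<Rightarrow> real" where
  "mutinf C = (\<Sum>y\<in>fst C. \<Sum>x\<in>(UNIV::bool set).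
      1/2 * snd C y x * log 2 (snd C y x / (1/2 * snd C y False + 1/2 * snd C y True)))"

definition lift :: "'y chan \<Rightarrow> 'y outp chan" where
  "lift C = (Base ` fst C, \<lambda>y x. case y of Base a \<Rightarrow> snd C a x | _ \<Rightarrow> 0)"

definition bminus :: "'y outp chan \<Rightarrow> 'y outp chan \<Rightarrow> 'y outp chan" where
  "bminus C1 C2 = ((\<lambda>(a,b). Two a b) ` (fst C1 \<times> fst C2),
     \<lambda>y x1. case y of Two a b \<Rightarrow> (\<Sum>x2\<in>(UNIV::bool set). 1/2 * snd C1 a (x1 \<noteq> x2) * snd C2 b x2)
                   | _ \<Rightarrow> 0)"

definition bplus :: "'y outp chan \<Rightarrow> 'y outp chan \<Rightarrow> 'y outp chan" where
  "bplus C1 C2 = ((\<lambda>(a,b,u). Three a b u) ` (fst C1 \<times> fst C2 \<times> (UNIV::bool set)),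
     \<lambda>y x2. case y of Three a b x1 \<Rightarrow> 1/2 * snd C1 a (x1 \<noteq> x2) * snd C2 b x2
                   | _ \<Rightarrow> 0)"

datatype sym = Plus | Minus | Star

text \<open>N m n for n \<ge> 0; indices n - m \<le> 0 are truncated to 0, where N = 1 as in the paper.
  The "max m 1" only matters for m = 0 (excluded by the theorem) and ensures termination.\<close>
fun Nn :: "nat \<Rightarrow> nat \<Rightarrow> nat" where
  "Nn m 0 = 1"
| "Nn m (Suc k) = Nn m k + Nn m (Suc k - max m 1)"

fun svec :: "nat \<Rightarrow> nat \<Rightarrow> nat \<Rightarrow> sym list" where
  "svec m 0 i = []"
| "svec m (Suc k) i =
     (if i \<le> Nn m (Suc k - m) then svec m k i @ [Plus]
      else if i \<le> Nn m k then svec m k i @ [Star]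
      else svec m k (i - Nn m k) @ [Minus])"

definition Sset :: "nat \<Rightarrow> nat \<Rightarrow> sym list set" where
  "Sset m n = svec m n ` {1..Nn m n}"

function Wch :: "nat \<Rightarrow> 'y chan \<Rightarrow> sym list \<Rightarrow> 'y outp chan" where
  "Wch m W t = (if t = [] then lift W else
     (case last t of
        Plus \<Rightarrow> bplus (Wch m W (take (length t - max m 1) t)) (Wch m W (butlast t))
      | Minus \<Rightarrow> bminus (Wch m W (take (length t - max m 1) t)) (Wch m W (butlast t))
      | Star \<Rightarrow> Wch m W (butlast t)))"
  by pat_completeness auto
termination
  by (relation "measure (\<lambda>(m,W,t). length t)") auto

end

theory Submission
  imports Defs
begin

lemma K:
  fixes a b t qa qb s d vm D :: real
  assumes "a \<ge> 0" "b \<ge> 0" "t \<ge> 0" "qa \<ge> a/2" "qb \<ge> b/2"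
    "s = 1/2*a*b" "d = 1/2*s + 1/2*t" "vm = s + t" "D = qa*qb"
  shows "1/2*s*log 2 (s/d) + 1/2*s*log 2 (vm/D) = 1/4*a*b*(log 2 (a/qa) + log 2 (b/qb))"
proof (cases "a = 0 \<or> b = 0")
  case True then show ?thesis using assms by auto
next
  case False
  then have a: "a > 0" and b: "b > 0" using assms by auto
  have qa: "qa > 0" and qb: "qb > 0" using a b assms by auto
  have ab: "a*b > 0" using a b by simp
  have s: "s > 0" using ab assms(6) by simp
  have vm: "vm > 0" using s assms by simp
  have d: "d = vm/2" using assms(7,8) by simp
  have ab2: "a*b = 2*s" using assms(6) by simp
  have sd: "s/d = a*b/vm" unfolding d ab2 by simp
  have "log 2 (s/d) + log 2 (vm/D) = log 2 (a/qa) + log 2 (b/qb)"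
    unfolding sd using a b qa qb vm assms
    by (simp add: log_divide log_mult)
  then have "1/2*s*(log 2 (s/d) + log 2 (vm/D)) = 1/2*s*(log 2 (a/qa) + log 2 (b/qb))"
    by simp
  also have "\<dots> = 1/4*a*b*(log 2 (a/qa) + log 2 (b/qb))" using ab2 by simp
  finally have "1/2*s*(log 2 (s/d) + log 2 (vm/D)) = 1/4*a*b*(log 2 (a/qa) + log 2 (b/qb))" .
  then show ?thesis by (simp add: algebra_simps)
qed

lemma point:
  fixes v1 v2 :: "bool \<Rightarrow> real"
  assumes "\<And>x. v1 x \<ge> 0" "\<And>x. v2 x \<ge> 0"
  shows "(\<Sum>u\<in>UNIV. \<Sum>x\<in>UNIV. 1/2 * (1/2 * v1 (u\<noteq>x) * v2 x) * log 2 ((1/2 * v1 (u\<noteq>x) * v2 x) / (1/2*(1/2 * v1 (u\<noteq>False) * v2 False) + 1/2*(1/2 * v1 (u\<noteq>True) * v2 True))))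
      + (\<Sum>u\<in>UNIV. 1/2 * (\<Sum>x\<in>UNIV. 1/2 * v1 (u\<noteq>x) * v2 x) * log 2 ((\<Sum>x\<in>UNIV. 1/2*v1 (u\<noteq>x)*v2 x) / (1/2 * (\<Sum>x\<in>UNIV. 1/2*v1 (False\<noteq>x)*v2 x) + 1/2*(\<Sum>x\<in>UNIV. 1/2*v1 (True\<noteq>x)*v2 x))))
      = 1/2*(v2 False + v2 True) * (\<Sum>x\<in>UNIV. 1/2 * v1 x * log 2 (v1 x/(1/2*v1 False + 1/2*v1 True)))
      + 1/2*(v1 False + v1 True) * (\<Sum>x\<in>UNIV. 1/2 * v2 x * log 2 (v2 x/(1/2*v2 False + 1/2*v2 True)))"
proof -
  define p where "p = v1 False"
  define p' where "p' = v1 True"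
  define r where "r = v2 False"
  define r' where "r' = v2 True"
  have h: "p \<ge> 0" "p' \<ge> 0" "r \<ge> 0" "r' \<ge> 0" using assms by (auto simp: p_def p'_def r_def r'_def)
  define qa where "qa = 1/2*p+1/2*p'"
  define qb where "qb = 1/2*r+1/2*r'"
  define D where "D = 1/2 * (1/2*p*r + 1/2*p'*r') + 1/2*(1/2*p'*r + 1/2*p*r')"
  have D: "D = qa*qb" by (simp add: D_def qa_def qb_def algebra_simps)
  have e1: "1/2*(1/2*p*r)*log 2 ((1/2*p*r)/(1/2*(1/2*p*r) + 1/2*(1/2*p'*r'))) + 1/2*(1/2*p*r)*log 2 ((1/2*p*r + 1/2*p'*r')/D)
    = 1/4*p*r*(log 2 (p/qa) + log 2 (r/qb))"
    by (rule K[where t="1/2*p'*r'"]) (use h D in \<open>auto simp: qa_def qb_def\<close>)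
  have e2: "1/2*(1/2*p'*r')*log 2 ((1/2*p'*r')/(1/2*(1/2*p*r) + 1/2*(1/2*p'*r'))) + 1/2*(1/2*p'*r')*log 2 ((1/2*p*r + 1/2*p'*r')/D)
    = 1/4*p'*r'*(log 2 (p'/qa) + log 2 (r'/qb))"
    by (rule K[where t="1/2*p*r"]) (use h D in \<open>auto simp: qa_def qb_def algebra_simps\<close>)
  have e3: "1/2*(1/2*p'*r)*log 2 ((1/2*p'*r)/(1/2*(1/2*p'*r) + 1/2*(1/2*p*r'))) + 1/2*(1/2*p'*r)*log 2 ((1/2*p'*r + 1/2*p*r')/D)
    = 1/4*p'*r*(log 2 (p'/qa) + log 2 (r/qb))"
    by (rule K[where t="1/2*p*r'"]) (use h D in \<open>auto simp: qa_def qb_def\<close>)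
  have e4: "1/2*(1/2*p*r')*log 2 ((1/2*p*r')/(1/2*(1/2*p'*r) + 1/2*(1/2*p*r'))) + 1/2*(1/2*p*r')*log 2 ((1/2*p'*r + 1/2*p*r')/D)
    = 1/4*p*r'*(log 2 (p/qa) + log 2 (r'/qb))"
    by (rule K[where t="1/2*p'*r"]) (use h D in \<open>auto simp: qa_def qb_def algebra_simps\<close>)
  have L: "(\<Sum>u\<in>UNIV. \<Sum>x\<in>UNIV. 1/2 * (1/2 * v1 (u\<noteq>x) * v2 x) * log 2 ((1/2 * v1 (u\<noteq>x) * v2 x) / (1/2*(1/2 * v1 (u\<noteq>False) * v2 False) + 1/2*(1/2 * v1 (u\<noteq>True) * v2 True))))
      + (\<Sum>u\<in>UNIV. 1/2 * (\<Sum>x\<in>UNIV. 1/2 * v1 (u\<noteq>x) * v2 x) * log 2 ((\<Sum>x\<in>UNIV. 1/2*v1 (u\<noteq>x)*v2 x) / (1/2 * (\<Sum>x\<in>UNIV. 1/2*v1 (False\<noteq>x)*v2 x) + 1/2*(\<Sum>x\<in>UNIV. 1/2*v1 (True\<noteq>x)*v2 x))))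
    = (1/2*(1/2*p*r)*log 2 ((1/2*p*r)/(1/2*(1/2*p*r) + 1/2*(1/2*p'*r'))) + 1/2*(1/2*p*r)*log 2 ((1/2*p*r + 1/2*p'*r')/D))
    + (1/2*(1/2*p'*r')*log 2 ((1/2*p'*r')/(1/2*(1/2*p*r) + 1/2*(1/2*p'*r'))) + 1/2*(1/2*p'*r')*log 2 ((1/2*p*r + 1/2*p'*r')/D))
    + (1/2*(1/2*p'*r)*log 2 ((1/2*p'*r)/(1/2*(1/2*p'*r) + 1/2*(1/2*p*r'))) + 1/2*(1/2*p'*r)*log 2 ((1/2*p'*r + 1/2*p*r')/D))
    + (1/2*(1/2*p*r')*log 2 ((1/2*p*r')/(1/2*(1/2*p'*r) + 1/2*(1/2*p*r'))) + 1/2*(1/2*p*r')*log 2 ((1/2*p'*r + 1/2*p*r')/D))"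
    by (simp add: UNIV_bool D_def p_def p'_def r_def r'_def algebra_simps)
  have R: "1/2*(v2 False + v2 True) * (\<Sum>x\<in>UNIV. 1/2 * v1 x * log 2 (v1 x/(1/2*v1 False + 1/2*v1 True)))
      + 1/2*(v1 False + v1 True) * (\<Sum>x\<in>UNIV. 1/2 * v2 x * log 2 (v2 x/(1/2*v2 False + 1/2*v2 True)))
    = 1/2*(r+r')*(1/2*p*log 2 (p/qa) + 1/2*p'*log 2 (p'/qa)) + 1/2*(p+p')*(1/2*r*log 2 (r/qb) + 1/2*r'*log 2 (r'/qb))"
    by (simp add: UNIV_bool qa_def qb_def p_def p'_def r_def r'_def)
  show ?thesis
    unfolding L R e1 e2 e3 e4 by (simp add: algebra_simps add_divide_distrib)
qed
lemma sum3: "(\<Sum>(a,b,u)\<in>A\<times>B\<times>C. F a b u) = (\<Sum>a\<in>A. \<Sum>b\<in>B. \<Sum>u\<in>C. F a b u)"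
  by (simp add: sum.cartesian_product)

lemma sum2: "(\<Sum>(a,b)\<in>A\<times>B. F a b) = (\<Sum>a\<in>A. \<Sum>b\<in>B. F a b)"
  by (simp add: sum.cartesian_product)

lemma sum3': "(\<Sum>a\<in>A. \<Sum>b\<in>B. \<Sum>u\<in>C. F a b u) = sum (\<lambda>z. F (fst z) (fst (snd z)) (snd (snd z))) (A\<times>B\<times>C)"
  by (simp add: sum.cartesian_product split_def)

lemma sum2': "(\<Sum>a\<in>A. \<Sum>b\<in>B. F a b) = sum (\<lambda>z. F (fst z) (snd z)) (A\<times>B)"
  by (simp add: sum.cartesian_product split_def)

lemma mutinf_bplus:
  "mutinf (bplus C1 C2) = (\<Sum>a\<in>fst C1. \<Sum>b\<in>fst C2. \<Sum>u\<in>UNIV. \<Sum>x\<in>UNIV. 1/2 * (1/2 * snd C1 a (u\<noteq>x) * snd C2 b x) * log 2 ((1/2 * snd C1 a (u\<noteq>x) * snd C2 b x) / (1/2*(1/2 * snd C1 a (u\<noteq>False) * snd C2 b False) + 1/2*(1/2 * snd C1 a (u\<noteq>True) * snd C2 b True))))"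
proof -
  have inj: "inj_on (\<lambda>(a,b,u). Three a b u) (fst C1 \<times> fst C2 \<times> UNIV)" by (auto simp: inj_on_def)
  show ?thesis
    apply (rule trans[OF _ sum3'[symmetric]])
    unfolding mutinf_def bplus_def fst_conv snd_conv sum.reindex[OF inj]
    by (rule sum.cong[OF refl]) (auto simp: mult_ac)
qed

lemma mutinf_bminus:
  "mutinf (bminus C1 C2) = (\<Sum>a\<in>fst C1. \<Sum>b\<in>fst C2. \<Sum>u\<in>UNIV. 1/2 * (\<Sum>x\<in>UNIV. 1/2 * snd C1 a (u\<noteq>x) * snd C2 b x) * log 2 ((\<Sum>x\<in>UNIV. 1/2*snd C1 a (u\<noteq>x)*snd C2 b x) / (1/2 * (\<Sum>x\<in>UNIV. 1/2*snd C1 a (False\<noteq>x)*snd C2 b x) + 1/2*(\<Sum>x\<in>UNIV. 1/2*snd C1 a (True\<noteq>x)*snd C2 b x))))"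
proof -
  have inj: "inj_on (\<lambda>(a,b). Two a b) (fst C1 \<times> fst C2)" by (auto simp: inj_on_def)
  show ?thesis
    apply (rule trans[OF _ sum2'[symmetric]])
    unfolding mutinf_def bminus_def fst_conv snd_conv sum.reindex[OF inj]
    by (rule sum.cong[OF refl]) auto
qed

lemma bdmcD:
  assumes "bdmc C"
  shows "finite (fst C)" "\<And>y x. y \<in> fst C \<Longrightarrow> snd C y x \<ge> 0" "\<And>x. (\<Sum>y\<in>fst C. snd C y x) = 1"
  using assms unfolding bdmc_def by auto

lemma bdmc_bplus:
  assumes "bdmc C1" "bdmc C2"
  shows "bdmc (bplus C1 C2)"
proof -
  note h1 = bdmcD[OF assms(1)] and h2 = bdmcD[OF assms(2)]
  have inj: "inj_on (\<lambda>(a,b,u). Three a b u) (fst C1 \<times> fst C2 \<times> UNIV)" by (auto simp: inj_on_def)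
  have s: "(\<Sum>y\<in>fst (bplus C1 C2). snd (bplus C1 C2) y x) = 1" for x
  proof -
    have "(\<Sum>y\<in>fst (bplus C1 C2). snd (bplus C1 C2) y x)
       = (\<Sum>a\<in>fst C1. \<Sum>b\<in>fst C2. \<Sum>u\<in>UNIV. 1/2 * snd C1 a (u\<noteq>x) * snd C2 b x)"
      apply (rule trans[OF _ sum3'[symmetric]])
      unfolding bplus_def fst_conv snd_conv sum.reindex[OF inj]
      by (rule sum.cong[OF refl]) auto
    also have "\<dots> = (\<Sum>a\<in>fst C1. \<Sum>u\<in>UNIV. \<Sum>b\<in>fst C2. 1/2 * snd C1 a (u\<noteq>x) * snd C2 b x)"
      by (rule sum.cong[OF refl]) (rule sum.swap)
    also have "\<dots> = (\<Sum>a\<in>fst C1. \<Sum>u\<in>UNIV. 1/2 * snd C1 a (u\<noteq>x) * (\<Sum>b\<in>fst C2. snd C2 b x))"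
      by (simp add: sum_distrib_left)
    also have "\<dots> = (\<Sum>a\<in>fst C1. \<Sum>u\<in>UNIV. 1/2 * snd C1 a (u\<noteq>x))"
      using h2(3) by simp
    also have "\<dots> = (\<Sum>u\<in>UNIV. \<Sum>a\<in>fst C1. 1/2 * snd C1 a (u\<noteq>x))"
      by (rule sum.swap)
    also have "\<dots> = (\<Sum>u\<in>UNIV. 1/2 * (\<Sum>a\<in>fst C1. snd C1 a (u\<noteq>x)))"
      by (simp add: sum_distrib_left)
    also have "\<dots> = 1" using h1(3) by (simp add: UNIV_bool)
    finally show ?thesis .
  qed
  show ?thesis unfolding bdmc_def
    using s h1 h2 by (auto simp: bplus_def)
qed

lemma bdmc_bminus:
  assumes "bdmc C1" "bdmc C2"
  shows "bdmc (bminus C1 C2)"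
proof -
  note h1 = bdmcD[OF assms(1)] and h2 = bdmcD[OF assms(2)]
  have inj: "inj_on (\<lambda>(a,b). Two a b) (fst C1 \<times> fst C2)" by (auto simp: inj_on_def)
  have s: "(\<Sum>y\<in>fst (bminus C1 C2). snd (bminus C1 C2) y x) = 1" for x
  proof -
    have "(\<Sum>y\<in>fst (bminus C1 C2). snd (bminus C1 C2) y x)
       = (\<Sum>a\<in>fst C1. \<Sum>b\<in>fst C2. \<Sum>u\<in>UNIV. 1/2 * snd C1 a (x\<noteq>u) * snd C2 b u)"
      apply (rule trans[OF _ sum2'[symmetric]])
      unfolding bminus_def fst_conv snd_conv sum.reindex[OF inj]
      by (rule sum.cong[OF refl]) auto
    also have "\<dots> = (\<Sum>a\<in>fst C1. \<Sum>u\<in>UNIV. \<Sum>b\<in>fst C2. 1/2 * snd C1 a (x\<noteq>u) * snd C2 b u)"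
      by (rule sum.cong[OF refl]) (rule sum.swap)
    also have "\<dots> = (\<Sum>u\<in>UNIV. \<Sum>a\<in>fst C1. \<Sum>b\<in>fst C2. 1/2 * snd C1 a (x\<noteq>u) * snd C2 b u)"
      by (rule sum.swap)
    also have "\<dots> = (\<Sum>u\<in>UNIV. \<Sum>a\<in>fst C1. 1/2 * snd C1 a (x\<noteq>u) * (\<Sum>b\<in>fst C2. snd C2 b u))"
      by (simp add: sum_distrib_left)
    also have "\<dots> = (\<Sum>u\<in>UNIV. 1/2 * (\<Sum>a\<in>fst C1. snd C1 a (x\<noteq>u)))"
      using h2(3) by (simp add: sum_distrib_left)
    also have "\<dots> = 1" using h1(3) by (simp add: UNIV_bool)
    finally show ?thesis .
  qed
  have nn: "\<And>y x. y \<in> fst (bminus C1 C2) \<Longrightarrow> snd (bminus C1 C2) y x \<ge> 0"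
    using h1(2) h2(2) by (auto simp: bminus_def intro!: sum_nonneg)
  show ?thesis unfolding bdmc_def
    using s h1 h2 nn by (auto simp: bminus_def)
qed

lemma sum_pair_add: "(\<Sum>a\<in>A. \<Sum>b\<in>B. f a b) + (\<Sum>a\<in>A. \<Sum>b\<in>B. g a b) = (\<Sum>a\<in>A. \<Sum>b\<in>B. f a b + g a b)"
  by (simp add: sum.distrib)

lemma chain:
  assumes "bdmc C1" "bdmc C2"
  shows "mutinf (bplus C1 C2) + mutinf (bminus C1 C2) = mutinf C1 + mutinf C2"
proof -
  note h1 = bdmcD[OF assms(1)] and h2 = bdmcD[OF assms(2)]
  define G1 where "G1 a = (\<Sum>x\<in>UNIV. 1/2 * snd C1 a x * log 2 (snd C1 a x/(1/2*snd C1 a False + 1/2*snd C1 a True)))" for a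
  define G2 where "G2 b = (\<Sum>x\<in>UNIV. 1/2 * snd C2 b x * log 2 (snd C2 b x/(1/2*snd C2 b False + 1/2*snd C2 b True)))" for b
  have "mutinf (bplus C1 C2) + mutinf (bminus C1 C2)
     = (\<Sum>a\<in>fst C1. \<Sum>b\<in>fst C2. 1/2*(snd C2 b False + snd C2 b True) * G1 a + 1/2*(snd C1 a False + snd C1 a True) * G2 b)"
    unfolding mutinf_bplus mutinf_bminus G1_def G2_def
    apply (rule trans[OF sum_pair_add])
    by (intro sum.cong[OF refl] point) (use h1 h2 in auto)
  also have "\<dots> = (\<Sum>a\<in>fst C1. G1 a) + (\<Sum>b\<in>fst C2. G2 b)"
  proof -
    have A: "(\<Sum>a\<in>fst C1. \<Sum>b\<in>fst C2. 1/2*(snd C2 b False + snd C2 b True) * G1 a) = (\<Sum>a\<in>fst C1. G1 a)"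
    proof -
      have c: "(\<Sum>b\<in>fst C2. 1/2*(snd C2 b False + snd C2 b True)) = 1"
        using h2(3) by (simp add: sum.distrib sum_distrib_left[symmetric] sum_divide_distrib[symmetric])
      show ?thesis by (simp only: sum_distrib_right[symmetric] c mult_1_left)
    qed
    have B: "(\<Sum>a\<in>fst C1. \<Sum>b\<in>fst C2. 1/2*(snd C1 a False + snd C1 a True) * G2 b) = (\<Sum>b\<in>fst C2. G2 b)"
    proof -
      have c: "(\<Sum>a\<in>fst C1. 1/2*(snd C1 a False + snd C1 a True)) = 1"
        using h1(3) by (simp add: sum.distrib sum_distrib_left[symmetric] sum_divide_distrib[symmetric])
      show ?thesis apply (subst sum.swap) by (simp only: sum_distrib_right[symmetric] c mult_1_left)
    qed
    show ?thesis using A B by (simp add: sum.distrib)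
  qed
  also have "\<dots> = mutinf C1 + mutinf C2" unfolding mutinf_def G1_def G2_def ..
  finally show ?thesis .
qed

declare Wch.simps[simp del]

lemma bdmc_lift: "bdmc W \<Longrightarrow> bdmc (lift W)"
  unfolding bdmc_def lift_def by (auto simp: sum.reindex inj_on_def)

lemma mutinf_lift: "mutinf (lift W) = mutinf W"
  unfolding mutinf_def lift_def by (simp add: sum.reindex inj_on_def)

lemma Wch_nil: "Wch m W [] = lift W"
  by (subst Wch.simps) simp

lemma Wch_snoc: "Wch m W (s@[x]) = (case x of
     Plus \<Rightarrow> bplus (Wch m W (take (Suc (length s) - max m 1) s)) (Wch m W s)
   | Minus \<Rightarrow> bminus (Wch m W (take (Suc (length s) - max m 1) s)) (Wch m W s)
   | Star \<Rightarrow> Wch m W s)"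
proof -
  have t: "take (Suc (length s) - max m 1) (s@[x]) = take (Suc (length s) - max m 1) s"
    by (simp add: take_append)
  show ?thesis
    apply (subst Wch.simps)
    using t by (simp split: sym.split)
qed

lemma bdmc_Wch: "bdmc W \<Longrightarrow> bdmc (Wch m W t)"
proof (induction "length t" arbitrary: t rule: less_induct)
  case less
  show ?case
  proof (cases t rule: rev_exhaust)
    case Nil then show ?thesis using less by (simp add: Wch_nil bdmc_lift)
  next
    case (snoc s x)
    have h1: "bdmc (Wch m W s)" using less snoc by simp
    have h2: "bdmc (Wch m W (take (Suc (length s) - max m 1) s))" using less snoc by simp
    show ?thesis using h1 h2 unfolding snoc Wch_snoc
      by (auto split: sym.split intro: bdmc_bplus bdmc_bminus)
  qed
qed

lemma Nn_pos: "Nn m k > 0"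
  by (induction k) auto

lemma Nn_mono: "k \<le> l \<Longrightarrow> Nn m k \<le> Nn m l"
  by (induction l) (auto simp: le_Suc_eq intro: le_trans)

lemma svec_len: "length (svec m k i) = k"
  by (induction k arbitrary: i) auto

lemma svec_Suc_low: "m \<ge> 1 \<Longrightarrow> i \<le> Nn m k \<Longrightarrow> \<exists>x. svec m (Suc k) i = svec m k i @ [x]"
  by auto

lemma svec_take: "m \<ge> 1 \<Longrightarrow> l \<le> k \<Longrightarrow> i \<le> Nn m l \<Longrightarrow> take l (svec m k i) = svec m l i"
proof (induction k)
  case 0 then show ?case by (simp add: svec_len)
next
  case (Suc k)
  show ?case
  proof (cases "l = Suc k")
    case True then show ?thesis by (simp add: svec_len)
  next
    case False
    then have lk: "l \<le> k" using Suc by simp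
    then have "i \<le> Nn m k" using Suc Nn_mono[OF lk, of m] by simp
    then obtain x where e: "svec m (Suc k) i = svec m k i @ [x]" using svec_Suc_low Suc by blast
    show ?thesis unfolding e using lk Suc by (simp add: svec_len)
  qed
qed

lemma svec_inj: "m \<ge> 1 \<Longrightarrow> inj_on (svec m k) {1..Nn m k}"
proof (induction k)
  case 0 then show ?case by simp
next
  case (Suc k)
  have NS: "Nn m (Suc k) = Nn m k + Nn m (Suc k - m)" using Suc by (simp add: max_def)
  have MN: "Nn m (Suc k - m) \<le> Nn m k" by (rule Nn_mono) (use Suc.prems in simp)
  show ?case
  proof (rule inj_onI)
    fix i j assume i: "i \<in> {1..Nn m (Suc k)}" and j: "j \<in> {1..Nn m (Suc k)}"
      and e: "svec m (Suc k) i = svec m (Suc k) j"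
    have IH: "\<And>a b. a \<in> {1..Nn m k} \<Longrightarrow> b \<in> {1..Nn m k} \<Longrightarrow> svec m k a = svec m k b \<Longrightarrow> a = b"
      using Suc(1)[OF Suc(2)] by (auto dest: inj_onD)
    have IH2: "i = j" if "\<not> i \<le> Nn m k" "\<not> j \<le> Nn m k" "i \<le> Nn m k + Nn m (Suc k - m)"
       "j \<le> Nn m k + Nn m (Suc k - m)" "svec m k (i - Nn m k) = svec m k (j - Nn m k)"
    proof -
      have "i - Nn m k = j - Nn m k" using that MN by (intro IH) auto
      then show ?thesis using that by simp
    qed
    show "i = j"
      using e i j MN NS IH[of i j] IH2
      by (auto split: if_splits)
  qed
qed

definition Asum :: "nat \<Rightarrow> 'y chan \<Rightarrow> nat \<Rightarrow> real" where
  "Asum m W n = (\<Sum>i\<in>{1..Nn m n}. mutinf (Wch m W (svec m n i)))"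

lemma Sset_sum: "m \<ge> 1 \<Longrightarrow> (\<Sum>s\<in>Sset m n. mutinf (Wch m W s)) = Asum m W n"
  unfolding Sset_def Asum_def by (subst sum.reindex[OF svec_inj]) simp_all

lemma Asum_step:
  assumes m: "m \<ge> 1" and W: "bdmc W"
  shows "Asum m W (Suc k) = Asum m W k + Asum m W (Suc k - m)"
proof -
  define N where "N = Nn m k"
  define M where "M = Nn m (Suc k - m)"
  define f where "f s = mutinf (Wch m W s)" for s
  have NS: "Nn m (Suc k) = N + M" using m by (simp add: max_def N_def M_def)
  have MN: "M \<le> N" unfolding M_def N_def by (rule Nn_mono) (use m in simp)
  have mx: "max m 1 = m" using m by simp
  let ?g = "\<lambda>i. f (svec m (Suc k) i)"
  have "Asum m W (Suc k) = (\<Sum>i\<in>{1..N+M}. ?g i)" unfolding Asum_def NS f_def ..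
  also have "\<dots> = (\<Sum>i\<in>{1..N}. ?g i) + (\<Sum>i\<in>{N+1..N+M}. ?g i)"
    by (rule sum.ub_add_nat) simp
  also have "(\<Sum>i\<in>{N+1..N+M}. ?g i) = (\<Sum>j\<in>{1..M}. ?g (j+N))"
    using sum.shift_bounds_cl_nat_ivl[of ?g 1 N M] by (simp add: add.commute)
  also have "\<dots> = (\<Sum>j\<in>{1..M}. f (svec m k j @ [Minus]))"
    by (rule sum.cong[OF refl]) (use MN in \<open>auto simp: N_def M_def\<close>)
  also have "(\<Sum>i\<in>{1..N}. ?g i) = (\<Sum>i\<in>{1..M}. ?g i) + (\<Sum>i\<in>{M+1..M+(N-M)}. ?g i)"
    using sum.ub_add_nat[of 1 M ?g "N-M"] MN by simp
  also have "(\<Sum>i\<in>{1..M}. ?g i) = (\<Sum>i\<in>{1..M}. f (svec m k i @ [Plus]))"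
    by (rule sum.cong[OF refl]) (use MN in \<open>auto simp: N_def M_def\<close>)
  also have "(\<Sum>i\<in>{M+1..M+(N-M)}. ?g i) = (\<Sum>i\<in>{M+1..M+(N-M)}. f (svec m k i))"
    by (rule sum.cong[OF refl]) (use MN in \<open>auto simp: N_def M_def f_def Wch_snoc\<close>)
  finally have A: "Asum m W (Suc k) = (\<Sum>i\<in>{1..M}. f (svec m k i @ [Plus]) + f (svec m k i @ [Minus]))
      + (\<Sum>i\<in>{M+1..M+(N-M)}. f (svec m k i))"
    by (simp add: sum.distrib)
  have pair: "f (svec m k i @ [Plus]) + f (svec m k i @ [Minus]) = f (svec m (Suc k - m) i) + f (svec m k i)"
    if i: "i \<in> {1..M}" for i
  proof -
    have t: "take (Suc (length (svec m k i)) - max m 1) (svec m k i) = svec m (Suc k - m) i"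
      unfolding svec_len mx using i m by (intro svec_take) (auto simp: M_def)
    show ?thesis unfolding f_def Wch_snoc t
      by (simp add: chain bdmc_Wch W)
  qed
  have "Asum m W (Suc k) = (\<Sum>i\<in>{1..M}. f (svec m (Suc k - m) i)) + ((\<Sum>i\<in>{1..M}. f (svec m k i)) + (\<Sum>i\<in>{M+1..M+(N-M)}. f (svec m k i)))"
    unfolding A using pair by (simp add: sum.distrib)
  also have "(\<Sum>i\<in>{1..M}. f (svec m k i)) + (\<Sum>i\<in>{M+1..M+(N-M)}. f (svec m k i)) = Asum m W k"
    unfolding Asum_def f_def N_def[symmetric] using sum.ub_add_nat[of 1 M "\<lambda>i. mutinf (Wch m W (svec m k i))" "N-M"] MN by simp
  finally show ?thesis unfolding Asum_def f_def M_def by simp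
qed

lemma Asum_val:
  assumes m: "m \<ge> 1" and W: "bdmc W"
  shows "Asum m W n = real (Nn m n) * mutinf W"
proof (induction n rule: less_induct)
  case (less n)
  show ?case
  proof (cases n)
    case 0 then show ?thesis by (simp add: Asum_def Wch_nil mutinf_lift)
  next
    case (Suc k)
    have mx: "max m (Suc 0) = m" using m by simp
    have "Asum m W n = Asum m W k + Asum m W (Suc k - m)" unfolding Suc by (rule Asum_step[OF m W])
    also have "\<dots> = real (Nn m k) * mutinf W + real (Nn m (Suc k - m)) * mutinf W"
      using less Suc m by simp
    finally show ?thesis unfolding Suc by (simp add: mx algebra_simps)
  qed
qed

theorem mainTheorem11:
  fixes m n :: nat and W :: "'y chan"
  assumes "m \<ge> 1" and "bdmc W" and "n \<ge> 1"
  shows "(\<Sum>s\<in>Sset m n. mutinf (Wch m W s))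
           = (\<Sum>s\<in>Sset m (n - 1). mutinf (Wch m W s)) + (\<Sum>s\<in>Sset m (n - m). mutinf (Wch m W s))
       \<and> (\<Sum>s\<in>Sset m n. mutinf (Wch m W s)) / real (Nn m n) = mutinf W"
proof -
  obtain k where n: "n = Suc k" using assms(3) by (cases n) auto
  have pos: "real (Nn m n) > 0" using Nn_pos by simp
  have mx: "max m (Suc 0) = m" using assms(1) by simp
  have d: "Asum m W n / real (Nn m n) = mutinf W"
    using Asum_val[OF assms(1,2), of n] pos by simp
  have e: "Asum m W n = Asum m W (n - 1) + Asum m W (n - m)"
    using Asum_step[OF assms(1,2), of k] n by simp
  show ?thesis
    unfolding Sset_sum[OF assms(1)] using d e by simp
qed

end
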